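(* (1) For all $x,y\in(0,\infty)$, $$\cosh(\sqrt{xy})\le\sqrt{\cosh x\cosh y}\le\cosh\Big(\sqrt{(x^2+y^2)/2}\Big)\le\tfrac12(\cosh x+\cosh y),$$ with equality if and only if $x=y$. (2) For $0<R<6$ and all $x,y\in(0,\sqrt R)$, $$\tfrac12(\cosh x+\cosh y)\le\cosh\Big(\sqrt{R-\sqrt{(R-x^2)(R-y^2)}}\Big),$$ with equality if and only if $x=y$. (3) For all $x,y\in(0,\infty)$, $$\frac{\sinh\sqrt{xy}}{\sqrt{xy}}\le\sqrt{\frac{\sinh x}{x}\cdot\frac{\sinh y}{y}}\le\frac{\sinh\sqrt{\frac12(x^2+y^2)}}{\sqrt{\frac12(x^2+y^2)}}\le\frac12\Big(\frac{\sinh x}{x}+\frac{\sinh y}{y}\Big),$$ with equality if and only if $x=y$. (4) For $0<R<10$ and all $x,y\in(0,\sqrt R)$, writing $s=\sqrt{R-\sqrt{(R-x^2)(R-y^2)}}$, $$\frac12\Big(\frac{\sinh x}{x}+\frac{\sinh y}{y}\Big)\le\frac{\sinh s}{s},$$ with equality if and only if $x=y$. *)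

theory Defs
  imports Complex_Main
begin

end

theory Submission
  imports Defs
begin

lemma mvt_pos:
  fixes f f' :: "real \<Rightarrow> real"
  assumes "a < b" "\<And>x. a \<le> x \<Longrightarrow> x \<le> b \<Longrightarrow> (f has_real_derivative f' x) (at x)"
    "\<And>x. a < x \<Longrightarrow> x < b \<Longrightarrow> f' x > 0"
  shows "f a < f b"
proof -
  obtain z where z: "a < z" "z < b" "f b - f a = (b - a) * f' z"
    using MVT2[OF assms(1,2)] by blast
  have "f' z > 0" using assms(3) z by auto
  then have "(b - a) * f' z > 0" using assms(1) by simp
  then show ?thesis using z by simp
qed

lemma pos_from_deriv:
  fixes f f' :: "real \<Rightarrow> real"
  assumes "f 0 = 0" "\<And>x. (f has_real_derivative f' x) (at x)" "\<And>x. x > 0 \<Longrightarrow> f' x > 0" "s > 0"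
  shows "f s > 0"
  using mvt_pos[of 0 s f f'] assms by auto

lemma midpoint_strict:
  fixes f f' :: "real \<Rightarrow> real"
  assumes "a < b" "\<And>x. a \<le> x \<Longrightarrow> x \<le> b \<Longrightarrow> (f has_real_derivative f' x) (at x)"
    "\<And>x y. a \<le> x \<Longrightarrow> x < y \<Longrightarrow> y \<le> b \<Longrightarrow> f' x < f' y"
  shows "2 * f ((a+b)/2) < f a + f b"
proof -
  define m where "m = (a+b)/2"
  have am: "a < m" "m < b" using assms(1) by (auto simp: m_def)
  obtain z1 where z1: "a < z1" "z1 < m" "f m - f a = (m - a) * f' z1"
    using MVT2[OF am(1), of f f'] assms(2) am by auto
  obtain z2 where z2: "m < z2" "z2 < b" "f b - f m = (b - m) * f' z2"
    using MVT2[OF am(2), of f f'] assms(2) am by auto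
  have "f' z1 < f' z2" using assms(3)[of z1 z2] z1 z2 by auto
  moreover have "m - a = b - m" "m - a > 0" using am by (auto simp: m_def field_simps)
  ultimately have "(m - a) * f' z1 < (b - m) * f' z2" by (metis mult_strict_left_mono)
  then show ?thesis using z1 z2 by (simp add: m_def)
qed

lemma midpoint_strict':
  fixes f f' :: "real \<Rightarrow> real"
  assumes "a \<noteq> b" "\<And>x. min a b \<le> x \<Longrightarrow> x \<le> max a b \<Longrightarrow> (f has_real_derivative f' x) (at x)"
    "\<And>x y. min a b \<le> x \<Longrightarrow> x < y \<Longrightarrow> y \<le> max a b \<Longrightarrow> f' x < f' y"
  shows "2 * f ((a+b)/2) < f a + f b"
proof (cases "a < b")
  case True
  then show ?thesis using midpoint_strict[of a b f f'] assms by auto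
next
  case False
  then have "b < a" using assms(1) by auto
  then show ?thesis using midpoint_strict[of b a f f'] assms by (auto simp: add.commute)
qed

lemma midpoint_strict_concave:
  fixes f f' :: "real \<Rightarrow> real"
  assumes "a \<noteq> b" "\<And>x. min a b \<le> x \<Longrightarrow> x \<le> max a b \<Longrightarrow> (f has_real_derivative f' x) (at x)"
    "\<And>x y. min a b \<le> x \<Longrightarrow> x < y \<Longrightarrow> y \<le> max a b \<Longrightarrow> f' y < f' x"
  shows "f a + f b < 2 * f ((a+b)/2)"
proof -
  have "2 * (- f ((a+b)/2)) < (- f a) + (- f b)"
    by (rule midpoint_strict'[of a b "\<lambda>x. - f x" "\<lambda>x. - f' x"])
       (use assms in \<open>auto intro!: derivative_eq_intros\<close>)
  then show ?thesis by simp
qed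

lemma E1: "s > 0 \<Longrightarrow> sinh s < s * cosh (s::real)"
proof -
  assume s: "s > 0"
  have "(\<lambda>s. s * cosh s - sinh s) s > 0"
    by (rule pos_from_deriv[where f'="\<lambda>s. s * sinh s"])
       (auto intro!: derivative_eq_intros simp: s)
  then show ?thesis by simp
qed

lemma E2a: "s > 0 \<Longrightarrow> s < sinh (s::real)"
proof -
  assume s: "s > 0"
  have "(\<lambda>s. sinh s - s) s > 0"
    by (rule pos_from_deriv[where f'="\<lambda>s. cosh s - 1"])
       (auto intro!: derivative_eq_intros simp: s cosh_real_nonneg_less_iff[of 0, simplified])
  then show ?thesis by simp
qed

lemma E2: "s > 0 \<Longrightarrow> s < sinh s * cosh (s::real)"
proof -
  assume s: "s > 0"
  have "s < sinh s" using E2a s by blast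
  also have "sinh s \<le> sinh s * cosh s" using cosh_real_ge_1[of s] s
    by (simp add: mult_le_cancel_left1)
  finally show ?thesis .
qed

lemma E3: "s > 0 \<Longrightarrow> 6 * s * cosh s < s^3 * cosh s + s^2 * sinh s + 6 * sinh (s::real)"
proof -
  assume s: "s > 0"
  have "(\<lambda>s. s^3 * cosh s + s^2 * sinh s + 6 * sinh s - 6 * s * cosh s) s > 0"
  proof (rule pos_from_deriv[where f="(\<lambda>s. s^3 * cosh s + s^2 * sinh s + 6 * sinh s - 6 * s * cosh s)" and f'="\<lambda>s. s * (4 * (s * cosh s - sinh s) + s^2 * sinh s)"])
    fix x :: real
    show "((\<lambda>s. s^3 * cosh s + s^2 * sinh s + 6 * sinh s - 6 * s * cosh s) has_real_derivative
       x * (4 * (x * cosh x - sinh x) + x^2 * sinh x)) (at x)"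
      by (auto intro!: derivative_eq_intros simp: algebra_simps power2_eq_square power3_eq_cube)
  next
    fix x :: real assume "x > 0"
    then show "0 < x * (4 * (x * cosh x - sinh x) + x^2 * sinh x)"
      using E1[of x] by (simp add: add_pos_pos)
  qed (use s in auto)
  then show ?thesis by simp
qed

lemma E4: "s > 0 \<Longrightarrow> 3 * s * cosh s < s^2 * sinh s + 3 * sinh (s::real)"
proof -
  assume s: "s > 0"
  have "(\<lambda>s. s^2 * sinh s + 3 * sinh s - 3 * s * cosh s) s > 0"
  proof (rule pos_from_deriv[where f="(\<lambda>s. s^2 * sinh s + 3 * sinh s - 3 * s * cosh s)" and f'="\<lambda>s. s * (s * cosh s - sinh s)"])
    fix x :: real
    show "((\<lambda>s. s^2 * sinh s + 3 * sinh s - 3 * s * cosh s) has_real_derivative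
       x * (x * cosh x - sinh x)) (at x)"
      by (auto intro!: derivative_eq_intros simp: algebra_simps power2_eq_square power3_eq_cube)
  next
    fix x :: real assume "x > 0"
    then show "0 < x * (x * cosh x - sinh x)"
      using E1[of x] by simp
  qed (use s in auto)
  then show ?thesis by simp
qed

lemma E5a: "s > 0 \<Longrightarrow> 12 * s * cosh s < s^3 * cosh s + 3 * s^2 * sinh s + 12 * sinh (s::real)"
proof -
  assume s: "s > 0"
  have "(\<lambda>s. s^3 * cosh s + 3 * s^2 * sinh s + 12 * sinh s - 12 * s * cosh s) s > 0"
  proof (rule pos_from_deriv[where f="(\<lambda>s. s^3 * cosh s + 3 * s^2 * sinh s + 12 * sinh s - 12 * s * cosh s)" and f'="\<lambda>s. s * (6 * (s * cosh s - sinh s) + s^2 * sinh s)"])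
    fix x :: real
    show "((\<lambda>s. s^3 * cosh s + 3 * s^2 * sinh s + 12 * sinh s - 12 * s * cosh s) has_real_derivative
       x * (6 * (x * cosh x - sinh x) + x^2 * sinh x)) (at x)"
      by (auto intro!: derivative_eq_intros simp: algebra_simps power2_eq_square power3_eq_cube)
  next
    fix x :: real assume "x > 0"
    then show "0 < x * (6 * (x * cosh x - sinh x) + x^2 * sinh x)"
      using E1[of x] by (simp add: add_pos_pos)
  qed (use s in auto)
  then show ?thesis by simp
qed

lemma E5: "s > 0 \<Longrightarrow> s^3 * cosh s + 9 * s^2 * sinh s + 30 * sinh s < s^4 * sinh s + 30 * s * cosh (s::real)"
proof -
  assume s: "s > 0"
  have "(\<lambda>s. s^4 * sinh s - s^3 * cosh s - 9 * s^2 * sinh s + 30 * s * cosh s - 30 * sinh s) s > 0"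
  proof (rule pos_from_deriv[where f="(\<lambda>s. s^4 * sinh s - s^3 * cosh s - 9 * s^2 * sinh s + 30 * s * cosh s - 30 * sinh s)" and f'="\<lambda>s. s * (s^3 * cosh s + 3 * s^2 * sinh s + 12 * sinh s - 12 * s * cosh s)"])
    fix x :: real
    show "((\<lambda>s. s^4 * sinh s - s^3 * cosh s - 9 * s^2 * sinh s + 30 * s * cosh s - 30 * sinh s) has_real_derivative
       x * (x^3 * cosh x + 3 * x^2 * sinh x + 12 * sinh x - 12 * x * cosh x)) (at x)"
      by (auto intro!: derivative_eq_intros simp: algebra_simps power2_eq_square power3_eq_cube power4_eq_xxxx)
  next
    fix x :: real assume "x > 0"
    then show "0 < x * (x^3 * cosh x + 3 * x^2 * sinh x + 12 * sinh x - 12 * x * cosh x)"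
      using E5a[of x] by simp
  qed (use s in auto)
  then show ?thesis by simp
qed

lemma E6a: "s > 0 \<Longrightarrow> 3 * sinh s * cosh (s::real) < 2 * s + s * (cosh s ^ 2 + sinh s ^ 2)"
proof -
  assume s: "s > 0"
  have "(\<lambda>s. 2 * s + s * (cosh s ^ 2 + sinh s ^ 2) - 3 * sinh s * cosh s) s > 0"
  proof (rule pos_from_deriv[where f="(\<lambda>s. 2 * s + s * (cosh s ^ 2 + sinh s ^ 2) - 3 * sinh s * cosh s)" and f'="\<lambda>s. 4 * sinh s * (s * cosh s - sinh s)"])
    fix x :: real
    have "((\<lambda>s. 2 * s + s * (cosh s ^ 2 + sinh s ^ 2) - 3 * sinh s * cosh s) has_real_derivative
       2 + (cosh x ^ 2 + sinh x ^ 2) + x * (2 * cosh x * sinh x + 2 * sinh x * cosh x) - 3 * (cosh x * cosh x + sinh x * sinh x)) (at x)"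
      by (auto intro!: derivative_eq_intros simp: algebra_simps power2_eq_square)
    moreover have "2 + (cosh x ^ 2 + sinh x ^ 2) + x * (2 * cosh x * sinh x + 2 * sinh x * cosh x) - 3 * (cosh x * cosh x + sinh x * sinh x)
       = 4 * sinh x * (x * cosh x - sinh x)"
      using cosh_square_eq[of x] by (simp add: algebra_simps power2_eq_square)
    ultimately show "((\<lambda>s. 2 * s + s * (cosh s ^ 2 + sinh s ^ 2) - 3 * sinh s * cosh s) has_real_derivative
       4 * sinh x * (x * cosh x - sinh x)) (at x)" by simp
  next
    fix x :: real assume "x > 0"
    then show "0 < 4 * sinh x * (x * cosh x - sinh x)"
      using E1[of x] by simp
  qed (use s in auto)
  then show ?thesis by simp
qed

lemma E6: "s > 0 \<Longrightarrow> 2 * sinh s ^ 2 < s^2 + s * sinh s * cosh (s::real)"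
proof -
  assume s: "s > 0"
  have "(\<lambda>s. s^2 + s * sinh s * cosh s - 2 * sinh s ^ 2) s > 0"
  proof (rule pos_from_deriv[where f="(\<lambda>s. s^2 + s * sinh s * cosh s - 2 * sinh s ^ 2)" and f'="\<lambda>s. 2 * s + s * (cosh s ^ 2 + sinh s ^ 2) - 3 * sinh s * cosh s"])
    fix x :: real
    show "((\<lambda>s. s^2 + s * sinh s * cosh s - 2 * sinh s ^ 2) has_real_derivative
       2 * x + x * (cosh x ^ 2 + sinh x ^ 2) - 3 * sinh x * cosh x) (at x)"
      by (auto intro!: derivative_eq_intros simp: algebra_simps power2_eq_square)
  next
    fix x :: real assume "x > 0"
    then show "0 < 2 * x + x * (cosh x ^ 2 + sinh x ^ 2) - 3 * sinh x * cosh x"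
      using E6a[of x] by simp
  qed (use s in auto)
  then show ?thesis by simp
qed

lemma incr_open:
  fixes f f' :: "real \<Rightarrow> real"
  assumes "\<And>x. lo < x \<Longrightarrow> x < hi \<Longrightarrow> (f has_real_derivative f' x) (at x)"
    "\<And>x. lo < x \<Longrightarrow> x < hi \<Longrightarrow> f' x > 0" "lo < x" "x < y" "y < hi"
  shows "f x < f y"
  using mvt_pos[of x y f f'] assms by auto

lemma M3: assumes "0 < s" "s < t" shows "sinh s / s < sinh t / (t::real)"
proof (rule incr_open[where f="\<lambda>s. sinh s / s" and f'="\<lambda>x. (x * cosh x - sinh x) / x^2" and lo=0 and hi="t+1"])
  fix x :: real assume x: "0 < x" "x < t + 1"
  show "((\<lambda>s. sinh s / s) has_real_derivative (x * cosh x - sinh x) / x^2) (at x)"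
    using x by (auto intro!: derivative_eq_intros simp: field_simps power2_eq_square)
  show "(x * cosh x - sinh x) / x^2 > 0" using E1[of x] x by simp
qed (use assms in auto)

lemma M4: assumes "0 < s" "s < t" shows "s * cosh s / sinh s < t * cosh t / sinh (t::real)"
proof (rule incr_open[where f="\<lambda>s. s * cosh s / sinh s" and f'="\<lambda>x. (sinh x * cosh x - x) / sinh x ^ 2" and lo=0 and hi="t+1"])
  fix x :: real assume x: "0 < x" "x < t + 1"
  have "sinh x \<noteq> 0" using x by simp
  then show "((\<lambda>s. s * cosh s / sinh s) has_real_derivative (sinh x * cosh x - x) / sinh x ^ 2) (at x)"
    using x cosh_square_eq[of x] by (auto intro!: derivative_eq_intros simp: field_simps power2_eq_square)
  show "(sinh x * cosh x - x) / sinh x ^ 2 > 0" using E2[of x] x by simp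
qed (use assms in auto)

lemma M5: assumes "0 < s" "s < t"
  shows "(t * cosh t - sinh t) / (t^2 * sinh t) < (s * cosh s - sinh s) / (s^2 * sinh (s::real))"
proof -
  have "- ((s * cosh s - sinh s) / (s^2 * sinh s)) < - ((t * cosh t - sinh t) / (t^2 * sinh t))"
  proof (rule incr_open[where f="\<lambda>s. - ((s * cosh s - sinh s) / (s^2 * sinh s))"
      and f'="\<lambda>x. (x^2 + x * sinh x * cosh x - 2 * sinh x ^ 2) / (x^3 * sinh x ^ 2)" and lo=0 and hi="t+1"])
    fix x :: real assume x: "0 < x" "x < t + 1"
    have "sinh x \<noteq> 0" using x by simp
    then show "((\<lambda>s. - ((s * cosh s - sinh s) / (s^2 * sinh s))) has_real_derivative
       (x^2 + x * sinh x * cosh x - 2 * sinh x ^ 2) / (x^3 * sinh x ^ 2)) (at x)"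
      using x cosh_square_eq[of x] by (auto intro!: derivative_eq_intros simp: field_simps power2_eq_square power3_eq_cube)
    show "(x^2 + x * sinh x * cosh x - 2 * sinh x ^ 2) / (x^3 * sinh x ^ 2) > 0" using E6[of x] x by simp
  qed (use assms in auto)
  then show ?thesis by simp
qed

lemma M6: assumes "0 < s" "s < t" shows "(s * cosh s - sinh s) / s^3 < (t * cosh t - sinh t) / (t::real)^3"
proof (rule incr_open[where f="\<lambda>s. (s * cosh s - sinh s) / s^3" and f'="\<lambda>x. (x^2 * sinh x + 3 * sinh x - 3 * x * cosh x) / x^4" and lo=0 and hi="t+1"])
  fix x :: real assume x: "0 < x" "x < t + 1"
  show "((\<lambda>s. (s * cosh s - sinh s) / s^3) has_real_derivative (x^2 * sinh x + 3 * sinh x - 3 * x * cosh x) / x^4) (at x)"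
    using x by (auto intro!: derivative_eq_intros simp: field_simps power2_eq_square power3_eq_cube power4_eq_xxxx)
  show "(x^2 * sinh x + 3 * sinh x - 3 * x * cosh x) / x^4 > 0" using E4[of x] x by simp
qed (use assms in auto)

lemma M7: assumes "0 < s" "s < t" "t < sqrt R" "R < 6"
  shows "(R - t^2) * sinh t / t < (R - s^2) * sinh s / (s::real)"
proof -
  have "- ((R - s^2) * sinh s / s) < - ((R - t^2) * sinh t / t)"
  proof (rule incr_open[where f="\<lambda>s. - ((R - s^2) * sinh s / s)"
      and f'="\<lambda>x. (2 * x^2 * sinh x - (R - x^2) * (x * cosh x - sinh x)) / x^2" and lo=0 and hi="sqrt R"])
    fix x :: real assume x: "0 < x" "x < sqrt R"
    show "((\<lambda>s. - ((R - s^2) * sinh s / s)) has_real_derivative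
       (2 * x^2 * sinh x - (R - x^2) * (x * cosh x - sinh x)) / x^2) (at x)"
      using x by (auto intro!: derivative_eq_intros simp: field_simps power2_eq_square power3_eq_cube)
    have "(R - x^2) * (x * cosh x - sinh x) < (6 - x^2) * (x * cosh x - sinh x)"
      using E1[of x] x assms by (intro mult_strict_right_mono) auto
    also have "\<dots> < 2 * x^2 * sinh x" using E3[of x] x by (simp add: algebra_simps power2_eq_square power3_eq_cube)
    finally show "(2 * x^2 * sinh x - (R - x^2) * (x * cosh x - sinh x)) / x^2 > 0" using x by simp
  qed (use assms in auto)
  then show ?thesis by simp
qed

lemma M8: assumes "0 < s" "s < t" "t < sqrt R" "R < 10"
  shows "(R - t^2) * (t * cosh t - sinh t) / t^3 < (R - s^2) * (s * cosh s - sinh s) / (s::real)^3"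
proof -
  have "- ((R - s^2) * (s * cosh s - sinh s) / s^3) < - ((R - t^2) * (t * cosh t - sinh t) / t^3)"
  proof (rule incr_open[where f="\<lambda>s. - ((R - s^2) * (s * cosh s - sinh s) / s^3)"
      and f'="\<lambda>x. (2 * x^2 * (x * cosh x - sinh x) - (R - x^2) * (x^2 * sinh x - 3 * x * cosh x + 3 * sinh x)) / x^4" and lo=0 and hi="sqrt R"])
    fix x :: real assume x: "0 < x" "x < sqrt R"
    show "((\<lambda>s. - ((R - s^2) * (s * cosh s - sinh s) / s^3)) has_real_derivative
       (2 * x^2 * (x * cosh x - sinh x) - (R - x^2) * (x^2 * sinh x - 3 * x * cosh x + 3 * sinh x)) / x^4) (at x)"
      using x by (auto intro!: derivative_eq_intros simp: field_simps power2_eq_square power3_eq_cube power4_eq_xxxx)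
    have "(R - x^2) * (x^2 * sinh x - 3 * x * cosh x + 3 * sinh x) < (10 - x^2) * (x^2 * sinh x - 3 * x * cosh x + 3 * sinh x)"
      using E4[of x] x assms by (intro mult_strict_right_mono) auto
    also have "\<dots> < 2 * x^2 * (x * cosh x - sinh x)" using E5[of x] x by (simp add: algebra_simps power2_eq_square power3_eq_cube power4_eq_xxxx)
    finally show "(2 * x^2 * (x * cosh x - sinh x) - (R - x^2) * (x^2 * sinh x - 3 * x * cosh x + 3 * sinh x)) / x^4 > 0" using x by simp
  qed (use assms in auto)
  then show ?thesis by simp
qed

lemma inv2_mono: "0 < (a::real) \<Longrightarrow> a < b \<Longrightarrow> 1 / (2 * b) < 1 / (2 * a)"
  by (simp add: frac_less2)

lemma exp_mid: assumes "0 < x" "0 < y" shows "exp ((ln x + ln y) / 2) = sqrt (x * y)"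
proof -
  have "(exp ((ln x + ln y) / 2))^2 = exp (ln x + ln y)"
    by (simp add: power2_eq_square exp_add[symmetric])
  also have "\<dots> = x * y" using assms by (simp add: exp_add)
  finally have "(exp ((ln x + ln y) / 2))^2 = x * y" .
  then show ?thesis using real_sqrt_unique[of "exp ((ln x + ln y) / 2)" "x * y"] by simp
qed

lemma C_deriv: "0 < v \<Longrightarrow> ((\<lambda>v. cosh (sqrt v)) has_real_derivative sinh (sqrt v) / sqrt v / 2) (at v)"
  by (auto intro!: derivative_eq_intros simp: field_simps)

lemma D_deriv: "0 < v \<Longrightarrow> ((\<lambda>v. sinh (sqrt v) / sqrt v) has_real_derivative
   ((sqrt v * cosh (sqrt v) - sinh (sqrt v)) / sqrt v ^ 3) / 2) (at v)"
  by (auto intro!: derivative_eq_intros simp: field_simps power2_eq_square power3_eq_cube)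

lemma P1a: assumes "0 < x" "0 < y" "x \<noteq> y" shows "cosh (sqrt (x * y)) < sqrt (cosh x * cosh y)"
proof -
  define f :: "real \<Rightarrow> real" where "f = (\<lambda>t. ln (cosh (exp t)))"
  have "2 * f ((ln x + ln y)/2) < f (ln x) + f (ln y)"
  proof (rule midpoint_strict'[where f'="\<lambda>t. tanh (exp t) * exp t"])
    show "ln x \<noteq> ln y" using assms by simp
  next
    fix t :: real
    show "(f has_real_derivative tanh (exp t) * exp t) (at t)"
      unfolding f_def by (auto intro!: derivative_eq_intros simp: tanh_def)
  next
    fix u v :: real assume "u < v"
    then have "exp u < exp v" by simp
    then show "tanh (exp u) * exp u < tanh (exp v) * exp v"
      by (intro mult_strict_mono) auto
  qed
  then have "2 * ln (cosh (sqrt (x * y))) < ln (cosh x) + ln (cosh y)"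
    by (simp add: f_def exp_mid assms)
  then have "ln (cosh (sqrt (x * y)) ^ 2) < ln (cosh x * cosh y)"
    by (simp add: ln_realpow ln_mult)
  then have "cosh (sqrt (x * y)) ^ 2 < cosh x * cosh y" by simp
  then show ?thesis by (rule real_less_rsqrt)
qed

lemma P1b: assumes "0 < x" "0 < y" "x \<noteq> y" shows "sqrt (cosh x * cosh y) < cosh (sqrt ((x^2 + y^2) / 2))"
proof -
  define f :: "real \<Rightarrow> real" where "f = (\<lambda>u. ln (cosh (sqrt u)))"
  have xy: "x^2 \<noteq> y^2" using assms by (metis less_le power2_eq_imp_eq)
  have "f (x^2) + f (y^2) < 2 * f ((x^2 + y^2)/2)"
  proof (rule midpoint_strict_concave[where f'="\<lambda>u. 1 / (2 * (sqrt u * cosh (sqrt u) / sinh (sqrt u)))"])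
    show "x^2 \<noteq> y^2" by (rule xy)
  next
    fix t :: real assume "min (x^2) (y^2) \<le> t"
    moreover have "0 < min (x^2) (y^2)" using assms by simp
    ultimately have t: "0 < t" by linarith
    then show "(f has_real_derivative 1 / (2 * (sqrt t * cosh (sqrt t) / sinh (sqrt t)))) (at t)"
      unfolding f_def by (auto intro!: derivative_eq_intros simp: field_simps)
  next
    fix u v :: real assume uv: "min (x^2) (y^2) \<le> u" "u < v"
    moreover have "0 < min (x^2) (y^2)" using assms by simp
    ultimately have u: "0 < u" by linarith
    have "sqrt u < sqrt v" using uv by simp
    then have "sqrt u * cosh (sqrt u) / sinh (sqrt u) < sqrt v * cosh (sqrt v) / sinh (sqrt v)"
      using M4 u by auto
    moreover have "0 < sqrt u * cosh (sqrt u) / sinh (sqrt u)" using u by simp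
    ultimately show "1 / (2 * (sqrt v * cosh (sqrt v) / sinh (sqrt v))) < 1 / (2 * (sqrt u * cosh (sqrt u) / sinh (sqrt u)))"
      by (intro inv2_mono)
  qed
  then have "ln (cosh x) + ln (cosh y) < 2 * ln (cosh (sqrt ((x^2 + y^2) / 2)))"
    using assms by (simp add: f_def)
  then have "ln (cosh x * cosh y) < ln (cosh (sqrt ((x^2 + y^2) / 2)) ^ 2)"
    by (simp add: ln_realpow ln_mult)
  then have "cosh x * cosh y < cosh (sqrt ((x^2 + y^2) / 2)) ^ 2" by simp
  then show ?thesis by (intro real_less_lsqrt) auto
qed

lemma P1c: assumes "0 < x" "0 < y" "x \<noteq> y" shows "cosh (sqrt ((x^2 + y^2) / 2)) < (cosh x + cosh y) / 2"
proof -
  define f :: "real \<Rightarrow> real" where "f = (\<lambda>u. cosh (sqrt u))"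
  have xy: "x^2 \<noteq> y^2" using assms by (metis less_le power2_eq_imp_eq)
  have "2 * f ((x^2 + y^2)/2) < f (x^2) + f (y^2)"
  proof (rule midpoint_strict'[where f'="\<lambda>u. sinh (sqrt u) / sqrt u / 2"])
    show "x^2 \<noteq> y^2" by (rule xy)
  next
    fix t :: real assume "min (x^2) (y^2) \<le> t"
    moreover have "0 < min (x^2) (y^2)" using assms by simp
    ultimately have t: "0 < t" by linarith
    then show "(f has_real_derivative sinh (sqrt t) / sqrt t / 2) (at t)"
      unfolding f_def by (rule C_deriv)
  next
    fix u v :: real assume uv: "min (x^2) (y^2) \<le> u" "u < v"
    moreover have "0 < min (x^2) (y^2)" using assms by simp
    ultimately have u: "0 < u" by linarith
    have "sqrt u < sqrt v" using uv by simp
    then have "sinh (sqrt u) / sqrt u < sinh (sqrt v) / sqrt v"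
      using u by (intro M3) auto
    then show "sinh (sqrt u) / sqrt u / 2 < sinh (sqrt v) / sqrt v / 2"
      by (intro divide_strict_right_mono) auto
  qed
  then show ?thesis using assms by (simp add: f_def)
qed

lemma P3a: assumes "0 < x" "0 < y" "x \<noteq> y"
  shows "sinh (sqrt (x * y)) / sqrt (x * y) < sqrt ((sinh x / x) * (sinh y / y))"
proof -
  define f :: "real \<Rightarrow> real" where "f = (\<lambda>t. ln (sinh (exp t)) - t)"
  have fe: "f t = ln (sinh (exp t) / exp t)" for t
    by (simp add: f_def ln_div)
  have "2 * f ((ln x + ln y)/2) < f (ln x) + f (ln y)"
  proof (rule midpoint_strict'[where f'="\<lambda>t. exp t * cosh (exp t) / sinh (exp t) - 1"])
    show "ln x \<noteq> ln y" using assms by simp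
  next
    fix t :: real
    show "(f has_real_derivative exp t * cosh (exp t) / sinh (exp t) - 1) (at t)"
      unfolding f_def by (auto intro!: derivative_eq_intros simp: field_simps)
  next
    fix u v :: real assume "u < v"
    then have "exp u < exp v" by simp
    then have "exp u * cosh (exp u) / sinh (exp u) < exp v * cosh (exp v) / sinh (exp v)"
      by (intro M4) auto
    then show "exp u * cosh (exp u) / sinh (exp u) - 1 < exp v * cosh (exp v) / sinh (exp v) - 1"
      by simp
  qed
  then have "2 * ln (sinh (sqrt (x * y)) / sqrt (x * y)) < ln (sinh x / x) + ln (sinh y / y)"
    by (simp only: fe exp_mid assms exp_ln)
  moreover have "ln ((sinh x / x) * (sinh y / y)) = ln (sinh x / x) + ln (sinh y / y)"
    by (rule ln_mult_pos) (use assms in auto)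
  moreover have "ln ((sinh (sqrt (x * y)) / sqrt (x * y)) ^ 2) = 2 * ln (sinh (sqrt (x * y)) / sqrt (x * y))"
    by (simp add: ln_realpow)
  ultimately have "ln ((sinh (sqrt (x * y)) / sqrt (x * y)) ^ 2) < ln ((sinh x / x) * (sinh y / y))"
    by linarith
  then have "(sinh (sqrt (x * y)) / sqrt (x * y)) ^ 2 < (sinh x / x) * (sinh y / y)"
    using assms by simp
  then show ?thesis by (rule real_less_rsqrt)
qed

lemma P3b: assumes "0 < x" "0 < y" "x \<noteq> y"
  shows "sqrt ((sinh x / x) * (sinh y / y)) < sinh (sqrt ((x^2 + y^2) / 2)) / sqrt ((x^2 + y^2) / 2)"
proof -
  define f :: "real \<Rightarrow> real" where "f = (\<lambda>u. ln (sinh (sqrt u)) - ln (sqrt u))"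
  have fe: "0 < u \<Longrightarrow> f u = ln (sinh (sqrt u) / sqrt u)" for u
    by (simp add: f_def ln_div)
  have xy: "x^2 \<noteq> y^2" using assms by (metis less_le power2_eq_imp_eq)
  have "f (x^2) + f (y^2) < 2 * f ((x^2 + y^2)/2)"
  proof (rule midpoint_strict_concave[where f'="\<lambda>u. ((sqrt u * cosh (sqrt u) - sinh (sqrt u)) / (sqrt u ^ 2 * sinh (sqrt u))) / 2"])
    show "x^2 \<noteq> y^2" by (rule xy)
  next
    fix t :: real assume "min (x^2) (y^2) \<le> t"
    moreover have "0 < min (x^2) (y^2)" using assms by simp
    ultimately have t: "0 < t" by linarith
    then show "(f has_real_derivative ((sqrt t * cosh (sqrt t) - sinh (sqrt t)) / (sqrt t ^ 2 * sinh (sqrt t))) / 2) (at t)"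
      unfolding f_def by (auto intro!: derivative_eq_intros simp: field_simps power2_eq_square)
  next
    fix u v :: real assume uv: "min (x^2) (y^2) \<le> u" "u < v"
    moreover have "0 < min (x^2) (y^2)" using assms by simp
    ultimately have u: "0 < u" by linarith
    have "sqrt u < sqrt v" using uv by simp
    then have "(sqrt v * cosh (sqrt v) - sinh (sqrt v)) / (sqrt v ^ 2 * sinh (sqrt v))
       < (sqrt u * cosh (sqrt u) - sinh (sqrt u)) / (sqrt u ^ 2 * sinh (sqrt u))"
      using u by (intro M5) auto
    then show "((sqrt v * cosh (sqrt v) - sinh (sqrt v)) / (sqrt v ^ 2 * sinh (sqrt v))) / 2
       < ((sqrt u * cosh (sqrt u) - sinh (sqrt u)) / (sqrt u ^ 2 * sinh (sqrt u))) / 2"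
      by (intro divide_strict_right_mono) auto
  qed
  moreover have "0 < (x^2 + y^2) / 2" using assms by (simp add: add_pos_pos)
  ultimately have "ln (sinh x / x) + ln (sinh y / y) < 2 * ln (sinh (sqrt ((x^2 + y^2) / 2)) / sqrt ((x^2 + y^2) / 2))"
    using assms by (simp add: fe)
  moreover have "ln ((sinh x / x) * (sinh y / y)) = ln (sinh x / x) + ln (sinh y / y)"
    by (rule ln_mult_pos) (use assms in auto)
  moreover have "ln ((sinh (sqrt ((x^2 + y^2) / 2)) / sqrt ((x^2 + y^2) / 2)) ^ 2) = 2 * ln (sinh (sqrt ((x^2 + y^2) / 2)) / sqrt ((x^2 + y^2) / 2))"
    by (simp add: ln_realpow)
  ultimately have "ln ((sinh x / x) * (sinh y / y)) < ln ((sinh (sqrt ((x^2 + y^2) / 2)) / sqrt ((x^2 + y^2) / 2)) ^ 2)"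
    by linarith
  moreover have "0 < sinh (sqrt ((x^2 + y^2) / 2)) / sqrt ((x^2 + y^2) / 2)"
    using \<open>0 < (x^2 + y^2) / 2\<close> by simp
  ultimately have "(sinh x / x) * (sinh y / y) < (sinh (sqrt ((x^2 + y^2) / 2)) / sqrt ((x^2 + y^2) / 2)) ^ 2"
    using assms by simp
  then show ?thesis by (intro real_less_lsqrt) (auto simp: add_pos_pos)
qed

lemma P3c: assumes "0 < x" "0 < y" "x \<noteq> y"
  shows "sinh (sqrt ((x^2 + y^2) / 2)) / sqrt ((x^2 + y^2) / 2) < (sinh x / x + sinh y / y) / 2"
proof -
  define f :: "real \<Rightarrow> real" where "f = (\<lambda>u. sinh (sqrt u) / sqrt u)"
  have xy: "x^2 \<noteq> y^2" using assms by (metis less_le power2_eq_imp_eq)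
  have "2 * f ((x^2 + y^2)/2) < f (x^2) + f (y^2)"
  proof (rule midpoint_strict'[where f'="\<lambda>v. ((sqrt v * cosh (sqrt v) - sinh (sqrt v)) / sqrt v ^ 3) / 2"])
    show "x^2 \<noteq> y^2" by (rule xy)
  next
    fix t :: real assume "min (x^2) (y^2) \<le> t"
    moreover have "0 < min (x^2) (y^2)" using assms by simp
    ultimately have t: "0 < t" by linarith
    then show "(f has_real_derivative ((sqrt t * cosh (sqrt t) - sinh (sqrt t)) / sqrt t ^ 3) / 2) (at t)"
      unfolding f_def by (rule D_deriv)
  next
    fix u v :: real assume uv: "min (x^2) (y^2) \<le> u" "u < v"
    moreover have "0 < min (x^2) (y^2)" using assms by simp
    ultimately have u: "0 < u" by linarith
    have "sqrt u < sqrt v" using uv by simp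
    then have "(sqrt u * cosh (sqrt u) - sinh (sqrt u)) / sqrt u ^ 3 < (sqrt v * cosh (sqrt v) - sinh (sqrt v)) / sqrt v ^ 3"
      using u by (intro M6) auto
    then show "((sqrt u * cosh (sqrt u) - sinh (sqrt u)) / sqrt u ^ 3) / 2 < ((sqrt v * cosh (sqrt v) - sinh (sqrt v)) / sqrt v ^ 3) / 2"
      by (intro divide_strict_right_mono) auto
  qed
  then have "f ((x^2 + y^2)/2) < (f (x^2) + f (y^2)) / 2" by (simp add: field_simps)
  then show ?thesis using assms by (simp add: f_def)
qed

lemma neg_half_eq: "(P / q) / 2 * (- e) = - (e * P / q) / (2::real)"
  by (simp add: field_simps)

lemma sq_lt: assumes "0 < x" "x < sqrt R" shows "x^2 < (R::real)"
proof -
  have "x^2 < (sqrt R)^2" using assms by (intro power_strict_mono) auto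
  moreover have "0 < R" using assms by (metis not_less order.strict_trans real_sqrt_le_0_iff)
  ultimately show ?thesis by simp
qed

lemma tau_range:
  assumes "0 < x" "x^2 < R" "0 < y" "y^2 < (R::real)" "t \<le> max (ln (R - x^2)) (ln (R - y^2))"
  shows "exp t < R"
proof -
  have "exp t \<le> exp (max (ln (R - x^2)) (ln (R - y^2)))" using assms by simp
  also have "\<dots> = max (R - x^2) (R - y^2)" using assms by (auto simp: max_def)
  also have "\<dots> < R" using assms by simp
  finally show ?thesis .
qed

lemma P2: assumes "R < 6" "0 < x" "x < sqrt R" "0 < y" "y < sqrt R" "x \<noteq> y"
  shows "(cosh x + cosh y) / 2 < cosh (sqrt (R - sqrt ((R - x^2) * (R - y^2))))"
proof -
  have x2: "x^2 < R" and y2: "y^2 < R" using sq_lt assms by auto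
  have xy: "x^2 \<noteq> y^2" using assms by (metis less_le power2_eq_imp_eq)
  define f :: "real \<Rightarrow> real" where "f = (\<lambda>t. cosh (sqrt (R - exp t)))"
  define a where "a = ln (R - x^2)"
  define b where "b = ln (R - y^2)"
  have "f a + f b < 2 * f ((a + b)/2)"
  proof (rule midpoint_strict_concave[where f'="\<lambda>t. sinh (sqrt (R - exp t)) / sqrt (R - exp t) / 2 * (- exp t)"])
    show "a \<noteq> b" using xy x2 y2 by (simp add: a_def b_def)
  next
    fix t :: real assume "t \<le> max a b"
    then have "exp t < R" using tau_range[of x R y t] assms x2 y2 by (simp add: a_def b_def)
    then have "0 < R - exp t" by simp
    have "((\<lambda>t. R - exp t) has_real_derivative - exp t) (at t)"
      by (auto intro!: derivative_eq_intros)
    from DERIV_chain2[OF C_deriv[OF \<open>0 < R - exp t\<close>] this]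
    show "(f has_real_derivative sinh (sqrt (R - exp t)) / sqrt (R - exp t) / 2 * (- exp t)) (at t)"
      by (simp add: f_def)
  next
    fix u v :: real assume uv: "u < v" "v \<le> max a b"
    then have ev: "exp v < R" using tau_range[of x R y v] assms x2 y2 by (simp add: a_def b_def)
    have eu: "exp u < exp v" using uv by simp
    define su where "su = sqrt (R - exp u)"
    define sv where "sv = sqrt (R - exp v)"
    have euR: "exp u < R" using eu ev by linarith
    have sv0: "0 < sv" using ev by (simp add: sv_def)
    have svu: "sv < su" using eu euR ev by (simp add: su_def sv_def)
    have suR: "su < sqrt R" by (simp add: su_def)
    have su2: "su^2 = R - exp u" using euR by (simp add: su_def)
    have sv2: "sv^2 = R - exp v" using ev by (simp add: sv_def)
    have "(R - su^2) * sinh su / su < (R - sv^2) * sinh sv / sv"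
      using M7[OF sv0 svu suR assms(1)] .
    then have "exp u * sinh su / su < exp v * sinh sv / sv" by (simp add: su2 sv2)
    then show "sinh (sqrt (R - exp v)) / sqrt (R - exp v) / 2 * - exp v
       < sinh (sqrt (R - exp u)) / sqrt (R - exp u) / 2 * - exp u"
      by (simp add: su_def[symmetric] sv_def[symmetric] field_simps)
  qed
  moreover have "f a = cosh x" using x2 assms by (simp add: f_def a_def)
  moreover have "f b = cosh y" using y2 assms by (simp add: f_def b_def)
  moreover have "f ((a + b)/2) = cosh (sqrt (R - sqrt ((R - x^2) * (R - y^2))))"
    using x2 y2 by (simp add: f_def a_def b_def exp_mid)
  ultimately show ?thesis by (simp add: field_simps)
qed

lemma P4: assumes "R < 10" "0 < x" "x < sqrt R" "0 < y" "y < sqrt R" "x \<noteq> y"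
  shows "(sinh x / x + sinh y / y) / 2 < sinh (sqrt (R - sqrt ((R - x^2) * (R - y^2)))) / sqrt (R - sqrt ((R - x^2) * (R - y^2)))"
proof -
  have x2: "x^2 < R" and y2: "y^2 < R" using sq_lt assms by auto
  have xy: "x^2 \<noteq> y^2" using assms by (metis less_le power2_eq_imp_eq)
  define f :: "real \<Rightarrow> real" where "f = (\<lambda>t. sinh (sqrt (R - exp t)) / sqrt (R - exp t))"
  define a where "a = ln (R - x^2)"
  define b where "b = ln (R - y^2)"
  have "f a + f b < 2 * f ((a + b)/2)"
  proof (rule midpoint_strict_concave[where f'="\<lambda>t. ((sqrt (R - exp t) * cosh (sqrt (R - exp t)) - sinh (sqrt (R - exp t))) / sqrt (R - exp t) ^ 3) / 2 * (- exp t)"])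
    show "a \<noteq> b" using xy x2 y2 by (simp add: a_def b_def)
  next
    fix t :: real assume "t \<le> max a b"
    then have "exp t < R" using tau_range[of x R y t] assms x2 y2 by (simp add: a_def b_def)
    then have "0 < R - exp t" by simp
    have "((\<lambda>t. R - exp t) has_real_derivative - exp t) (at t)"
      by (auto intro!: derivative_eq_intros)
    from DERIV_chain2[OF D_deriv[OF \<open>0 < R - exp t\<close>] this]
    show "(f has_real_derivative ((sqrt (R - exp t) * cosh (sqrt (R - exp t)) - sinh (sqrt (R - exp t))) / sqrt (R - exp t) ^ 3) / 2 * (- exp t)) (at t)"
      by (simp add: f_def)
  next
    fix u v :: real assume uv: "u < v" "v \<le> max a b"
    then have ev: "exp v < R" using tau_range[of x R y v] assms x2 y2 by (simp add: a_def b_def)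
    have eu: "exp u < exp v" using uv by simp
    define su where "su = sqrt (R - exp u)"
    define sv where "sv = sqrt (R - exp v)"
    have euR: "exp u < R" using eu ev by linarith
    have sv0: "0 < sv" using ev by (simp add: sv_def)
    have svu: "sv < su" using eu euR ev by (simp add: su_def sv_def)
    have suR: "su < sqrt R" by (simp add: su_def)
    have su2: "su^2 = R - exp u" using euR by (simp add: su_def)
    have sv2: "sv^2 = R - exp v" using ev by (simp add: sv_def)
    have "(R - su^2) * (su * cosh su - sinh su) / su^3 < (R - sv^2) * (sv * cosh sv - sinh sv) / sv^3"
      using M8[OF sv0 svu suR assms(1)] .
    then have "exp u * (su * cosh su - sinh su) / su^3 < exp v * (sv * cosh sv - sinh sv) / sv^3" by (simp add: su2 sv2)
    then show "((sqrt (R - exp v) * cosh (sqrt (R - exp v)) - sinh (sqrt (R - exp v))) / sqrt (R - exp v) ^ 3) / 2 * (- exp v)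
       < ((sqrt (R - exp u) * cosh (sqrt (R - exp u)) - sinh (sqrt (R - exp u))) / sqrt (R - exp u) ^ 3) / 2 * (- exp u)"
      unfolding su_def[symmetric] sv_def[symmetric] neg_half_eq by (simp only: neg_less_iff_less divide_strict_right_mono zero_less_numeral)
  qed
  moreover have "f a = sinh x / x" using x2 assms by (simp add: f_def a_def)
  moreover have "f b = sinh y / y" using y2 assms by (simp add: f_def b_def)
  moreover have "f ((a + b)/2) = sinh (sqrt (R - sqrt ((R - x^2) * (R - y^2)))) / sqrt (R - sqrt ((R - x^2) * (R - y^2)))"
    using x2 y2 by (simp add: f_def a_def b_def exp_mid)
  ultimately show ?thesis by (simp add: field_simps)
qed

theorem corollary3p8:
  shows
  "(\<forall>x y :: real. 0 < x \<and> 0 < y \<longrightarrow>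
      (cosh (sqrt (x * y)) \<le> sqrt (cosh x * cosh y)
       \<and> sqrt (cosh x * cosh y) \<le> cosh (sqrt ((x\<^sup>2 + y\<^sup>2) / 2))
       \<and> cosh (sqrt ((x\<^sup>2 + y\<^sup>2) / 2)) \<le> (cosh x + cosh y) / 2)
    \<and> (cosh (sqrt (x * y)) = sqrt (cosh x * cosh y) \<longleftrightarrow> x = y)
    \<and> (sqrt (cosh x * cosh y) = cosh (sqrt ((x\<^sup>2 + y\<^sup>2) / 2)) \<longleftrightarrow> x = y)
    \<and> (cosh (sqrt ((x\<^sup>2 + y\<^sup>2) / 2)) = (cosh x + cosh y) / 2 \<longleftrightarrow> x = y))
 \<and> (\<forall>R x y :: real. 0 < R \<and> R < 6 \<and> 0 < x \<and> x < sqrt R \<and> 0 < y \<and> y < sqrt R \<longrightarrow>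
      (cosh x + cosh y) / 2 \<le> cosh (sqrt (R - sqrt ((R - x\<^sup>2) * (R - y\<^sup>2))))
    \<and> ((cosh x + cosh y) / 2 = cosh (sqrt (R - sqrt ((R - x\<^sup>2) * (R - y\<^sup>2)))) \<longleftrightarrow> x = y))
 \<and> (\<forall>x y :: real. 0 < x \<and> 0 < y \<longrightarrow>
      (sinh (sqrt (x * y)) / sqrt (x * y) \<le> sqrt ((sinh x / x) * (sinh y / y))
       \<and> sqrt ((sinh x / x) * (sinh y / y))
           \<le> sinh (sqrt ((x\<^sup>2 + y\<^sup>2) / 2)) / sqrt ((x\<^sup>2 + y\<^sup>2) / 2)
       \<and> sinh (sqrt ((x\<^sup>2 + y\<^sup>2) / 2)) / sqrt ((x\<^sup>2 + y\<^sup>2) / 2)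
           \<le> (sinh x / x + sinh y / y) / 2)
    \<and> (sinh (sqrt (x * y)) / sqrt (x * y) = sqrt ((sinh x / x) * (sinh y / y)) \<longleftrightarrow> x = y)
    \<and> (sqrt ((sinh x / x) * (sinh y / y))
           = sinh (sqrt ((x\<^sup>2 + y\<^sup>2) / 2)) / sqrt ((x\<^sup>2 + y\<^sup>2) / 2) \<longleftrightarrow> x = y)
    \<and> (sinh (sqrt ((x\<^sup>2 + y\<^sup>2) / 2)) / sqrt ((x\<^sup>2 + y\<^sup>2) / 2)
           = (sinh x / x + sinh y / y) / 2 \<longleftrightarrow> x = y))
 \<and> (\<forall>R x y :: real. 0 < R \<and> R < 10 \<and> 0 < x \<and> x < sqrt R \<and> 0 < y \<and> y < sqrt R \<longrightarrow>
      (let s = sqrt (R - sqrt ((R - x\<^sup>2) * (R - y\<^sup>2))) in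
        (sinh x / x + sinh y / y) / 2 \<le> sinh s / s
      \<and> ((sinh x / x + sinh y / y) / 2 = sinh s / s \<longleftrightarrow> x = y)))"
proof (intro conjI)
  show "\<forall>x y :: real. 0 < x \<and> 0 < y \<longrightarrow>
      (cosh (sqrt (x * y)) \<le> sqrt (cosh x * cosh y)
       \<and> sqrt (cosh x * cosh y) \<le> cosh (sqrt ((x\<^sup>2 + y\<^sup>2) / 2))
       \<and> cosh (sqrt ((x\<^sup>2 + y\<^sup>2) / 2)) \<le> (cosh x + cosh y) / 2)
    \<and> (cosh (sqrt (x * y)) = sqrt (cosh x * cosh y) \<longleftrightarrow> x = y)
    \<and> (sqrt (cosh x * cosh y) = cosh (sqrt ((x\<^sup>2 + y\<^sup>2) / 2)) \<longleftrightarrow> x = y)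
    \<and> (cosh (sqrt ((x\<^sup>2 + y\<^sup>2) / 2)) = (cosh x + cosh y) / 2 \<longleftrightarrow> x = y)"
  proof (intro allI impI)
    fix x y :: real assume h: "0 < x \<and> 0 < y"
    show "(cosh (sqrt (x * y)) \<le> sqrt (cosh x * cosh y)
       \<and> sqrt (cosh x * cosh y) \<le> cosh (sqrt ((x\<^sup>2 + y\<^sup>2) / 2))
       \<and> cosh (sqrt ((x\<^sup>2 + y\<^sup>2) / 2)) \<le> (cosh x + cosh y) / 2)
    \<and> (cosh (sqrt (x * y)) = sqrt (cosh x * cosh y) \<longleftrightarrow> x = y)
    \<and> (sqrt (cosh x * cosh y) = cosh (sqrt ((x\<^sup>2 + y\<^sup>2) / 2)) \<longleftrightarrow> x = y)
    \<and> (cosh (sqrt ((x\<^sup>2 + y\<^sup>2) / 2)) = (cosh x + cosh y) / 2 \<longleftrightarrow> x = y)"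
    proof (cases "x = y")
      case True
      then show ?thesis using h by simp
    next
      case False
      then show ?thesis using P1a[of x y] P1b[of x y] P1c[of x y] h by auto
    qed
  qed
next
  show "\<forall>R x y :: real. 0 < R \<and> R < 6 \<and> 0 < x \<and> x < sqrt R \<and> 0 < y \<and> y < sqrt R \<longrightarrow>
      (cosh x + cosh y) / 2 \<le> cosh (sqrt (R - sqrt ((R - x\<^sup>2) * (R - y\<^sup>2))))
    \<and> ((cosh x + cosh y) / 2 = cosh (sqrt (R - sqrt ((R - x\<^sup>2) * (R - y\<^sup>2)))) \<longleftrightarrow> x = y)"
  proof (intro allI impI)
    fix R x y :: real assume h: "0 < R \<and> R < 6 \<and> 0 < x \<and> x < sqrt R \<and> 0 < y \<and> y < sqrt R"
    show "(cosh x + cosh y) / 2 \<le> cosh (sqrt (R - sqrt ((R - x\<^sup>2) * (R - y\<^sup>2))))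
    \<and> ((cosh x + cosh y) / 2 = cosh (sqrt (R - sqrt ((R - x\<^sup>2) * (R - y\<^sup>2)))) \<longleftrightarrow> x = y)"
    proof (cases "x = y")
      case True
      have "x^2 < R" using sq_lt h by auto
      then show ?thesis using h True by simp
    next
      case False
      then show ?thesis using P2[of R x y] h by auto
    qed
  qed
next
  show "\<forall>x y :: real. 0 < x \<and> 0 < y \<longrightarrow>
      (sinh (sqrt (x * y)) / sqrt (x * y) \<le> sqrt ((sinh x / x) * (sinh y / y))
       \<and> sqrt ((sinh x / x) * (sinh y / y))
           \<le> sinh (sqrt ((x\<^sup>2 + y\<^sup>2) / 2)) / sqrt ((x\<^sup>2 + y\<^sup>2) / 2)
       \<and> sinh (sqrt ((x\<^sup>2 + y\<^sup>2) / 2)) / sqrt ((x\<^sup>2 + y\<^sup>2) / 2)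
           \<le> (sinh x / x + sinh y / y) / 2)
    \<and> (sinh (sqrt (x * y)) / sqrt (x * y) = sqrt ((sinh x / x) * (sinh y / y)) \<longleftrightarrow> x = y)
    \<and> (sqrt ((sinh x / x) * (sinh y / y))
           = sinh (sqrt ((x\<^sup>2 + y\<^sup>2) / 2)) / sqrt ((x\<^sup>2 + y\<^sup>2) / 2) \<longleftrightarrow> x = y)
    \<and> (sinh (sqrt ((x\<^sup>2 + y\<^sup>2) / 2)) / sqrt ((x\<^sup>2 + y\<^sup>2) / 2)
           = (sinh x / x + sinh y / y) / 2 \<longleftrightarrow> x = y)"
  proof (intro allI impI)
    fix x y :: real assume h: "0 < x \<and> 0 < y"
    show "(sinh (sqrt (x * y)) / sqrt (x * y) \<le> sqrt ((sinh x / x) * (sinh y / y))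
       \<and> sqrt ((sinh x / x) * (sinh y / y))
           \<le> sinh (sqrt ((x\<^sup>2 + y\<^sup>2) / 2)) / sqrt ((x\<^sup>2 + y\<^sup>2) / 2)
       \<and> sinh (sqrt ((x\<^sup>2 + y\<^sup>2) / 2)) / sqrt ((x\<^sup>2 + y\<^sup>2) / 2)
           \<le> (sinh x / x + sinh y / y) / 2)
    \<and> (sinh (sqrt (x * y)) / sqrt (x * y) = sqrt ((sinh x / x) * (sinh y / y)) \<longleftrightarrow> x = y)
    \<and> (sqrt ((sinh x / x) * (sinh y / y))
           = sinh (sqrt ((x\<^sup>2 + y\<^sup>2) / 2)) / sqrt ((x\<^sup>2 + y\<^sup>2) / 2) \<longleftrightarrow> x = y)
    \<and> (sinh (sqrt ((x\<^sup>2 + y\<^sup>2) / 2)) / sqrt ((x\<^sup>2 + y\<^sup>2) / 2)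
           = (sinh x / x + sinh y / y) / 2 \<longleftrightarrow> x = y)"
    proof (cases "x = y")
      case True
      have "sqrt ((sinh y / y) * (sinh y / y)) = sinh y / y" by (subst real_sqrt_abs2) (use h in simp)
      then show ?thesis using h True by simp
    next
      case False
      then show ?thesis using P3a[of x y] P3b[of x y] P3c[of x y] h by auto
    qed
  qed
next
  show "\<forall>R x y :: real. 0 < R \<and> R < 10 \<and> 0 < x \<and> x < sqrt R \<and> 0 < y \<and> y < sqrt R \<longrightarrow>
      (let s = sqrt (R - sqrt ((R - x\<^sup>2) * (R - y\<^sup>2))) in
        (sinh x / x + sinh y / y) / 2 \<le> sinh s / s
      \<and> ((sinh x / x + sinh y / y) / 2 = sinh s / s \<longleftrightarrow> x = y))"
  proof (intro allI impI)
    fix R x y :: real assume h: "0 < R \<and> R < 10 \<and> 0 < x \<and> x < sqrt R \<and> 0 < y \<and> y < sqrt R"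
    show "let s = sqrt (R - sqrt ((R - x\<^sup>2) * (R - y\<^sup>2))) in
        (sinh x / x + sinh y / y) / 2 \<le> sinh s / s
      \<and> ((sinh x / x + sinh y / y) / 2 = sinh s / s \<longleftrightarrow> x = y)"
    proof (cases "x = y")
      case True
      have "x^2 < R" using sq_lt h by auto
      then show ?thesis using h True by (simp add: Let_def)
    next
      case False
      then show ?thesis using P4[of R x y] h by (auto simp: Let_def)
    qed
  qed
qed

end
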